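(* Let $G$ be a finite group, let $n\ge 1$ and let $m$ be odd. Suppose $G$ is $R_{2^n m}$ and $G$ has exactly $m(2^n-1)$ conjugacy classes containing involutions. Then for every central involution $z$ of $G$ and every involution $x\neq z$ of $G$, the element $xz$ is an involution that is not conjugate to $x$ in $G$.
   Context: For a finite group $G$, $\overline{G}=G\cup\{\infty\}$, and $K_V$ denotes the complete graph on vertex set $V$. $G$ acts on $\overline{G}$ by right multiplication, with $\infty g=\infty$ for all $g\in G$; for a subgraph $F$ of $K_{\overline{G}}$ and $g\in G$, $Fg$ is the graph obtained by replacing every vertex $v$ by $vg$. A $k$-factor of $K_V$ is a spanning $k$-regular subgraph, and a $k$-factorization is a set of $k$-factors whose edge sets partition the edge set of $K_V$. A $k$-factorization $\mathcal{F}$ of $K_{\overline{G}}$ is $1$-rotational if $Fg\in\mathcal{F}$ for all $F\in\mathcal{F}$ and $g\in G$. A finite group $G$ is called $R_k$ if there exists a $1$-rotational $k$-factorization of $K_{\overline{G}}$. An involution is an element of order $2$; a central involution is an involution in the center of $G$. *)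

theory Defs
  imports "HOL-Algebra.Algebra"
begin

(* The vertex set  G-bar = G \<union> {\<infinity>}:  Some g  stands for g \<in> G,  None  stands for \<infinity>. *)
definition gbar :: "('a, 'b) monoid_scheme \<Rightarrow> 'a option set" where
  "gbar G = Some ` carrier G \<union> {None}"

definition complete_edges :: "'v set \<Rightarrow> 'v set set" where
  "complete_edges V = {e. e \<subseteq> V \<and> card e = 2}"

definition degree_in :: "'v set set \<Rightarrow> 'v \<Rightarrow> nat" where
  "degree_in F v = card {e \<in> F. v \<in> e}"

definition is_k_factor :: "'v set \<Rightarrow> nat \<Rightarrow> 'v set set \<Rightarrow> bool" where
  "is_k_factor V k F \<longleftrightarrow> F \<subseteq> complete_edges V \<and> (\<forall>v\<in>V. degree_in F v = k)"

definition is_k_factorization :: "'v set \<Rightarrow> nat \<Rightarrow> 'v set set set \<Rightarrow> bool" where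
  "is_k_factorization V k \<F> \<longleftrightarrow>
     (\<forall>F\<in>\<F>. is_k_factor V k F) \<and>
     (\<forall>F1\<in>\<F>. \<forall>F2\<in>\<F>. F1 \<noteq> F2 \<longrightarrow> F1 \<inter> F2 = {}) \<and>
     \<Union>\<F> = complete_edges V"

definition rmult :: "('a, 'b) monoid_scheme \<Rightarrow> 'a \<Rightarrow> 'a option \<Rightarrow> 'a option" where
  "rmult G g v = (case v of None \<Rightarrow> None | Some x \<Rightarrow> Some (x \<otimes>\<^bsub>G\<^esub> g))"

definition graph_translate :: "('a, 'b) monoid_scheme \<Rightarrow> 'a option set set \<Rightarrow> 'a \<Rightarrow> 'a option set set" where
  "graph_translate G F g = (\<lambda>e. rmult G g ` e) ` F"

definition one_rotational :: "('a, 'b) monoid_scheme \<Rightarrow> nat \<Rightarrow> 'a option set set set \<Rightarrow> bool" where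
  "one_rotational G k \<F> \<longleftrightarrow> is_k_factorization (gbar G) k \<F> \<and>
     (\<forall>F\<in>\<F>. \<forall>g\<in>carrier G. graph_translate G F g \<in> \<F>)"

definition is_R :: "('a, 'b) monoid_scheme \<Rightarrow> nat \<Rightarrow> bool" where
  "is_R G k \<longleftrightarrow> (\<exists>\<F>. one_rotational G k \<F>)"

definition involution :: "('a, 'b) monoid_scheme \<Rightarrow> 'a \<Rightarrow> bool" where
  "involution G x \<longleftrightarrow> x \<in> carrier G \<and> group.ord G x = 2"

definition central :: "('a, 'b) monoid_scheme \<Rightarrow> 'a \<Rightarrow> bool" where
  "central G z \<longleftrightarrow> z \<in> carrier G \<and> (\<forall>g\<in>carrier G. z \<otimes>\<^bsub>G\<^esub> g = g \<otimes>\<^bsub>G\<^esub> z)"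

definition conj_class :: "('a, 'b) monoid_scheme \<Rightarrow> 'a \<Rightarrow> 'a set" where
  "conj_class G x = {inv\<^bsub>G\<^esub> g \<otimes>\<^bsub>G\<^esub> x \<otimes>\<^bsub>G\<^esub> g | g. g \<in> carrier G}"

definition conjugate :: "('a, 'b) monoid_scheme \<Rightarrow> 'a \<Rightarrow> 'a \<Rightarrow> bool" where
  "conjugate G x y \<longleftrightarrow> (\<exists>g\<in>carrier G. y = inv\<^bsub>G\<^esub> g \<otimes>\<^bsub>G\<^esub> x \<otimes>\<^bsub>G\<^esub> g)"

definition num_invol_classes :: "('a, 'b) monoid_scheme \<Rightarrow> nat" where
  "num_invol_classes G = card {conj_class G x | x. involution G x}"

end

theory Submission
  imports Defs
begin


lemma (in group) coset_not_all_invol: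
  assumes fin: "finite (carrier G)" and ord: "order G = 2^n * m" and odd: "odd m"
    and P: "subgroup P G" and cP: "card P = 2^n"
    and g: "g \<in> carrier G" and gP: "g \<notin> P"
  shows "\<exists>c\<in>P #> g. \<not> (c \<noteq> \<one> \<and> c \<otimes> c = \<one>)"
proof (rule ccontr)
  assume "\<not> ?thesis"
  hence all: "\<And>p. p \<in> P \<Longrightarrow> (p \<otimes> g) \<otimes> (p \<otimes> g) = \<one>"
    unfolding r_coset_def by blast
  have Pc: "\<And>p. p \<in> P \<Longrightarrow> p \<in> carrier G" using P subgroup.subset by blast
  have P1: "\<one> \<in> P" using subgroup.one_closed[OF P] by simp
  have Pm: "\<And>a b. a \<in> P \<Longrightarrow> b \<in> P \<Longrightarrow> a \<otimes> b \<in> P" using subgroup.m_closed[OF P] by simp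
  have Pi: "\<And>a. a \<in> P \<Longrightarrow> inv a \<in> P" using subgroup.m_inv_closed[OF P] by simp
  have gg: "g \<otimes> g = \<one>" using all[OF P1] g by simp
  have key: "\<And>p. p \<in> P \<Longrightarrow> g \<otimes> p \<otimes> g = inv p"
  proof -
    fix p assume p: "p \<in> P"
    have "p \<otimes> (g \<otimes> p \<otimes> g) = \<one>" using all[OF p] Pc[OF p] g by (simp add: m_assoc)
    thus "g \<otimes> p \<otimes> g = inv p" using Pc[OF p] g
      by (metis inv_comm inv_equality m_closed)
  qed
  have gp: "\<And>p. p \<in> P \<Longrightarrow> g \<otimes> p = inv p \<otimes> g"
  proof -
    fix p assume p: "p \<in> P"
    have "g \<otimes> p = g \<otimes> p \<otimes> (g \<otimes> g)" using gg Pc[OF p] g by simp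
    also have "\<dots> = (g \<otimes> p \<otimes> g) \<otimes> g" using Pc[OF p] g by (simp add: m_assoc)
    finally show "g \<otimes> p = inv p \<otimes> g" using key[OF p] by simp
  qed
  define C where "C = (\<lambda>p. p \<otimes> g) ` P"
  have Cdef: "P #> g = C" unfolding r_coset_def C_def by blast
  define H where "H = P \<union> C"
  have sub: "subgroup H G"
  proof (rule subgroupI)
    show "H \<subseteq> carrier G" unfolding H_def C_def using Pc g m_closed by blast
    show "H \<noteq> {}" unfolding H_def using P1 by blast
  next
    fix a assume aH: "a \<in> H"
    then consider "a \<in> P" | p where "p \<in> P" "a = p \<otimes> g" unfolding H_def C_def by blast
    thus "inv a \<in> H"
    proof cases
      case 1 thus ?thesis unfolding H_def using Pi by blast
    next
      case 2
      have "inv a = a" using all[OF 2(1)] 2 Pc[OF 2(1)] g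
        by (metis inv_equality m_closed)
      thus ?thesis using aH by simp
    qed
  next
    fix a b assume a: "a \<in> H" and b: "b \<in> H"
    from a consider "a \<in> P" | p where "p \<in> P" "a = p \<otimes> g" unfolding H_def C_def by blast
    thus "a \<otimes> b \<in> H"
    proof cases
      case a1: 1
      from b consider "b \<in> P" | q where "q \<in> P" "b = q \<otimes> g" unfolding H_def C_def by blast
      thus ?thesis
      proof cases
        case 1 thus ?thesis using a1 Pm unfolding H_def by blast
      next
        case 2
        have "a \<otimes> b = (a \<otimes> q) \<otimes> g" using 2 a1 Pc g by (simp add: m_assoc)
        moreover have "a \<otimes> q \<in> P" using a1 2 Pm by blast
        ultimately show ?thesis unfolding H_def C_def by blast
      qed
    next
      case a2: 2
      from b consider "b \<in> P" | q where "q \<in> P" "b = q \<otimes> g" unfolding H_def C_def by blast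
      thus ?thesis
      proof cases
        case 1
        have "a \<otimes> b = p \<otimes> (g \<otimes> b)" using a2 1 Pc g by (simp add: m_assoc)
        also have "\<dots> = (p \<otimes> inv b) \<otimes> g" using gp[OF 1] a2 1 Pc g by (simp add: m_assoc)
        finally have "a \<otimes> b = (p \<otimes> inv b) \<otimes> g" .
        moreover have "p \<otimes> inv b \<in> P" using a2 1 Pm Pi by blast
        ultimately show ?thesis unfolding H_def C_def by blast
      next
        case 2
        have "a \<otimes> b = p \<otimes> (g \<otimes> q \<otimes> g)" using a2 2 Pc g by (simp add: m_assoc)
        also have "\<dots> = p \<otimes> inv q" using key[OF 2(1)] by simp
        finally have "a \<otimes> b = p \<otimes> inv q" .
        moreover have "p \<otimes> inv q \<in> P" using a2 2 Pm Pi by blast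
        ultimately show ?thesis unfolding H_def by simp
      qed
    qed
  qed
  have disj: "P \<inter> C = {}"
  proof (rule ccontr)
    assume "P \<inter> C \<noteq> {}"
    then obtain p q where p: "p \<in> P" and q: "q \<in> P" and e: "p = q \<otimes> g" unfolding C_def by blast
    have "g = inv q \<otimes> p" using e Pc[OF p] Pc[OF q] g by (simp add: m_assoc[symmetric])
    hence "g \<in> P" using p q Pm Pi by metis
    thus False using gP by simp
  qed
  have finP: "finite P" using fin P subgroup.subset finite_subset by blast
  have "inj_on (\<lambda>p. p \<otimes> g) P" using Pc g by (auto simp: inj_on_def)
  hence cC: "card C = 2^n" using cP unfolding C_def by (simp add: card_image)
  have cH: "card H = 2^(Suc n)" unfolding H_def
    using card_Un_disjoint[OF finP _ disj] finP cP cC unfolding C_def by simp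
  have "card (rcosets H) * card H = order G" using lagrange[OF sub] .
  hence "card H dvd 2^n * m" using ord by (metis dvd_triv_right)
  hence "2^n * 2 dvd 2^n * m" using cH by simp
  hence "2 dvd m" by simp
  thus False using odd by simp
qed

lemma (in group) invol_count:
  assumes fin: "finite (carrier G)" and ord: "order G = 2^n * m" and odd: "odd m"
  shows "card {x \<in> carrier G. x \<noteq> \<one> \<and> x \<otimes> x = \<one>} \<le> m * (2^n - 1)"
proof -
  have "sylow G 2 n m" unfolding sylow_eq
    using is_group ord fin by (auto simp: sylow_axioms_def)
  then obtain P where P: "subgroup P G" and cP: "card P = 2^n"
    using sylow.sylow_thm by blast
  define Inv where "Inv = {x \<in> carrier G. x \<noteq> \<one> \<and> x \<otimes> x = \<one>}"
  have "card (rcosets P) * card P = order G" using lagrange[OF P] .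
  hence cR: "card (rcosets P) = m" using ord cP by simp
  have finR: "finite (rcosets P)"
  proof -
    have "rcosets P \<subseteq> Pow (carrier G)" using P subgroup.subset
      unfolding RCOSETS_def r_coset_def by fastforce
    thus ?thesis using fin finite_subset by blast
  qed
  have per: "\<And>C. C \<in> rcosets P \<Longrightarrow> card (C \<inter> Inv) \<le> 2^n - 1"
  proof -
    fix C assume C: "C \<in> rcosets P"
    then obtain g where g: "g \<in> carrier G" and Cg: "C = P #> g" unfolding RCOSETS_def by blast
    have cC: "card C = 2^n" using card_rcosets_equal[OF C] P subgroup.subset cP by metis
    have finC: "finite C" using cC by (metis card.infinite nat.simps(3) power_not_zero zero_neq_numeral)
    have "\<exists>c\<in>C. c \<notin> Inv"
    proof (cases "g \<in> P")
      case True
      hence "C = P" using Cg subgroup.rcos_const[OF P is_group] by simp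
      thus ?thesis using subgroup.one_closed[OF P] unfolding Inv_def by blast
    next
      case False
      thus ?thesis using coset_not_all_invol[OF fin ord odd P cP g] Cg unfolding Inv_def by blast
    qed
    hence "C \<inter> Inv \<subset> C" by blast
    hence "card (C \<inter> Inv) < card C" using finC psubset_card_mono by blast
    thus "card (C \<inter> Inv) \<le> 2^n - 1" using cC by simp
  qed
  have "Inv \<subseteq> (\<Union>C\<in>rcosets P. C \<inter> Inv)"
  proof
    fix x assume x: "x \<in> Inv"
    hence xc: "x \<in> carrier G" unfolding Inv_def by simp
    have "x \<in> P #> x" using rcos_self[OF xc P] .
    moreover have "P #> x \<in> rcosets P" using xc unfolding RCOSETS_def by blast
    ultimately show "x \<in> (\<Union>C\<in>rcosets P. C \<inter> Inv)" using x by blast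
  qed
  hence "card Inv \<le> card (\<Union>C\<in>rcosets P. C \<inter> Inv)"
    using finR fin by (intro card_mono) (auto simp: Inv_def)
  also have "\<dots> \<le> (\<Sum>C\<in>rcosets P. card (C \<inter> Inv))" by (rule card_UN_le[OF finR])
  also have "\<dots> \<le> (\<Sum>C\<in>rcosets P. 2^n - 1)" using per by (rule sum_mono)
  also have "\<dots> = m * (2^n - 1)" using cR by simp
  finally show ?thesis unfolding Inv_def .
qed



lemma (in group) cancel_l [simp]:
  "g \<in> carrier G \<Longrightarrow> x \<in> carrier G \<Longrightarrow> g \<otimes> (inv g \<otimes> x) = x"
  by (simp add: m_assoc[symmetric])

lemma (in group) cancel_l2 [simp]:
  "g \<in> carrier G \<Longrightarrow> x \<in> carrier G \<Longrightarrow> inv g \<otimes> (g \<otimes> x) = x"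
  by (simp add: m_assoc[symmetric])

lemma (in group) invol_iff:
  "involution G x \<longleftrightarrow> x \<in> carrier G \<and> x \<noteq> \<one> \<and> x \<otimes> x = \<one>"
proof
  assume "involution G x"
  hence x: "x \<in> carrier G" and o: "ord x = 2" unfolding involution_def by auto
  have "x [^] (2::nat) = \<one>" using pow_eq_id[OF x] o by simp
  hence "x \<otimes> x = \<one>" using x by (simp add: numeral_2_eq_2)
  moreover have "x \<noteq> \<one>" using o ord_eq_1[OF x] by auto
  ultimately show "x \<in> carrier G \<and> x \<noteq> \<one> \<and> x \<otimes> x = \<one>" using x by simp
next
  assume h: "x \<in> carrier G \<and> x \<noteq> \<one> \<and> x \<otimes> x = \<one>"
  hence x: "x \<in> carrier G" by simp
  have "x [^] (2::nat) = \<one>" using h by (simp add: numeral_2_eq_2)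
  hence d: "ord x dvd 2" using pow_eq_id[OF x] by simp
  have "ord x \<noteq> 1" using h ord_eq_1[OF x] by simp
  moreover have "ord x \<le> 2" using d by (simp add: dvd_imp_le)
  moreover have "ord x \<noteq> 0" using d by (metis dvd_0_left zero_neq_numeral)
  ultimately have "ord x = 2" by linarith
  thus "involution G x" unfolding involution_def using x by simp
qed

lemma (in group) conj_invol:
  assumes "x \<in> carrier G" "x \<noteq> \<one>" "x \<otimes> x = \<one>" "g \<in> carrier G"
  shows "inv g \<otimes> x \<otimes> g \<noteq> \<one> \<and> (inv g \<otimes> x \<otimes> g) \<otimes> (inv g \<otimes> x \<otimes> g) = \<one>"
proof
  show "inv g \<otimes> x \<otimes> g \<noteq> \<one>"
  proof
    assume "inv g \<otimes> x \<otimes> g = \<one>"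
    hence "g \<otimes> (inv g \<otimes> x \<otimes> g) \<otimes> inv g = \<one>" using assms by simp
    hence "x = \<one>" using assms by (simp add: m_assoc)
    thus False using assms by simp
  qed
  have "(inv g \<otimes> x \<otimes> g) \<otimes> (inv g \<otimes> x \<otimes> g) = inv g \<otimes> (x \<otimes> x) \<otimes> g"
    using assms(1,4) by (simp add: m_assoc)
  also have "inv g \<otimes> (x \<otimes> x) \<otimes> g = \<one>" using assms(3,4) by simp
  finally show "(inv g \<otimes> x \<otimes> g) \<otimes> (inv g \<otimes> x \<otimes> g) = \<one>" .
qed

lemma (in group) conj_comp:
  assumes "x \<in> carrier G" "g \<in> carrier G" "h \<in> carrier G"
  shows "inv h \<otimes> (inv g \<otimes> x \<otimes> g) \<otimes> h = inv (g \<otimes> h) \<otimes> x \<otimes> (g \<otimes> h)"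
  using assms by (simp add: m_assoc inv_mult_group)

lemma (in group) conj_back:
  assumes "x \<in> carrier G" "g \<in> carrier G"
  shows "inv (inv g) \<otimes> (inv g \<otimes> x \<otimes> g) \<otimes> inv g = x"
  using assms by (simp add: m_assoc)

lemma (in group) conj_class_eq:
  assumes x: "x \<in> carrier G" and y: "y \<in> conj_class G x"
  shows "conj_class G y = conj_class G x"
proof -
  obtain g where g: "g \<in> carrier G" and yd: "y = inv g \<otimes> x \<otimes> g"
    using y unfolding conj_class_def by blast
  show ?thesis
  proof
    show "conj_class G y \<subseteq> conj_class G x"
    proof
      fix z assume "z \<in> conj_class G y"
      then obtain h where h: "h \<in> carrier G" and zd: "z = inv h \<otimes> y \<otimes> h"
        unfolding conj_class_def by blast
      have "z = inv (g \<otimes> h) \<otimes> x \<otimes> (g \<otimes> h)" using zd yd conj_comp[OF x g h] by simp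
      thus "z \<in> conj_class G x" unfolding conj_class_def using g h by blast
    qed
  next
    show "conj_class G x \<subseteq> conj_class G y"
    proof
      fix z assume "z \<in> conj_class G x"
      then obtain h where h: "h \<in> carrier G" and zd: "z = inv h \<otimes> x \<otimes> h"
        unfolding conj_class_def by blast
      have yc: "y \<in> carrier G" using yd x g by simp
      have xe: "x = inv (inv g) \<otimes> y \<otimes> inv g" using conj_back[OF x g] yd by simp
      have "z = inv (inv g \<otimes> h) \<otimes> y \<otimes> (inv g \<otimes> h)"
        using zd xe conj_comp[OF yc _ h, of "inv g"] g by simp
      thus "z \<in> conj_class G y" unfolding conj_class_def using g h by blast
    qed
  qed
qed

lemma (in group) conj_class_self: "x \<in> carrier G \<Longrightarrow> x \<in> conj_class G x"
  unfolding conj_class_def by (rule CollectI, rule exI[of _ \<one>]) simp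



lemma kf_sub: "is_k_factorization V k FF \<Longrightarrow> F \<in> FF \<Longrightarrow> F \<subseteq> complete_edges V"
  unfolding is_k_factorization_def is_k_factor_def by simp
lemma kf_deg: "is_k_factorization V k FF \<Longrightarrow> F \<in> FF \<Longrightarrow> v \<in> V \<Longrightarrow> degree_in F v = k"
  unfolding is_k_factorization_def is_k_factor_def by simp
lemma kf_disj: "is_k_factorization V k FF \<Longrightarrow> F1 \<in> FF \<Longrightarrow> F2 \<in> FF \<Longrightarrow> e \<in> F1 \<Longrightarrow> e \<in> F2 \<Longrightarrow> F1 = F2"
  unfolding is_k_factorization_def by (metis disjoint_iff)
lemma kf_cover: "is_k_factorization V k FF \<Longrightarrow> e \<in> complete_edges V \<Longrightarrow> \<exists>F\<in>FF. e \<in> F"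
  unfolding is_k_factorization_def by (metis UnionE)

locale rot = group G for G :: "('a, 'b) monoid_scheme" (structure) +
  fixes k :: nat and FF :: "'a option set set set"
  assumes rot: "one_rotational G k FF" and kpos: "0 < k"
begin

abbreviation T where "T F g \<equiv> graph_translate G F g"

definition Stab where "Stab F = {g \<in> carrier G. T F g = F}"

definition AA where "AA F = {b \<in> carrier G. {None, Some b} \<in> F}"

lemma kf: "is_k_factorization (gbar G) k FF" using rot unfolding one_rotational_def by simp

lemma F_sub: "F \<in> FF \<Longrightarrow> F \<subseteq> complete_edges (gbar G)"
  using kf_sub[OF kf] .

lemma F_disj: "F1 \<in> FF \<Longrightarrow> F2 \<in> FF \<Longrightarrow> e \<in> F1 \<Longrightarrow> e \<in> F2 \<Longrightarrow> F1 = F2"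
  using kf_disj[OF kf] .

lemma F_cover: "e \<in> complete_edges (gbar G) \<Longrightarrow> \<exists>F\<in>FF. e \<in> F"
  using kf_cover[OF kf] .

lemma F_trans: "F \<in> FF \<Longrightarrow> g \<in> carrier G \<Longrightarrow> T F g \<in> FF"
  using rot unfolding one_rotational_def by simp

lemma F_deg: "F \<in> FF \<Longrightarrow> degree_in F None = k"
  using kf_deg[OF kf] unfolding gbar_def by simp

lemma edge_trans: "e \<in> F \<Longrightarrow> rmult G g ` e \<in> T F g"
  unfolding graph_translate_def by blast

lemma rmult_None [simp]: "rmult G g None = None"
  unfolding rmult_def by simp

lemma rmult_Some [simp]: "rmult G g (Some x) = Some (x \<otimes> g)"
  unfolding rmult_def by simp

lemma T_comp:
  assumes F: "F \<in> FF" and a: "a \<in> carrier G" and b: "b \<in> carrier G"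
  shows "T (T F a) b = T F (a \<otimes> b)"
proof -
  have "\<And>e. e \<in> F \<Longrightarrow> rmult G b ` (rmult G a ` e) = rmult G (a \<otimes> b) ` e"
  proof -
    fix e assume e: "e \<in> F"
    hence eg: "e \<subseteq> gbar G" using F_sub[OF F] unfolding complete_edges_def by blast
    have "\<And>v. v \<in> e \<Longrightarrow> rmult G b (rmult G a v) = rmult G (a \<otimes> b) v"
    proof -
      fix v assume "v \<in> e"
      hence "v \<in> gbar G" using eg by blast
      thus "rmult G b (rmult G a v) = rmult G (a \<otimes> b) v"
        unfolding gbar_def using a b by (auto simp: m_assoc)
    qed
    thus "rmult G b ` (rmult G a ` e) = rmult G (a \<otimes> b) ` e"
      by (simp add: image_image cong: image_cong)
  qed
  thus ?thesis unfolding graph_translate_def image_image by (simp cong: image_cong)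
qed

lemma T_one:
  assumes F: "F \<in> FF"
  shows "T F \<one> = F"
proof -
  have "\<And>e. e \<in> F \<Longrightarrow> rmult G \<one> ` e = e"
  proof -
    fix e assume e: "e \<in> F"
    hence eg: "e \<subseteq> gbar G" using F_sub[OF F] unfolding complete_edges_def by blast
    have "\<And>v. v \<in> e \<Longrightarrow> rmult G \<one> v = v"
    proof -
      fix v assume "v \<in> e"
      hence "v \<in> gbar G" using eg by blast
      thus "rmult G \<one> v = v" unfolding gbar_def by auto
    qed
    thus "rmult G \<one> ` e = e" by (simp cong: image_cong)
  qed
  thus ?thesis unfolding graph_translate_def by (simp cong: image_cong)
qed

lemma stab_edge:
  assumes F: "F \<in> FF" and g: "g \<in> carrier G" and e: "e \<in> F" and e': "rmult G g ` e \<in> F"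
  shows "g \<in> Stab F"
proof -
  have "T F g = F" using F_disj[OF F_trans[OF F g] F edge_trans[OF e] e'] .
  thus ?thesis unfolding Stab_def using g by blast
qed

lemma stab_subgroup:
  assumes F: "F \<in> FF"
  shows "subgroup (Stab F) G"
proof (rule subgroupI)
  show "Stab F \<subseteq> carrier G" unfolding Stab_def by blast
  show "Stab F \<noteq> {}" using T_one[OF F] unfolding Stab_def by blast
next
  fix a assume a: "a \<in> Stab F"
  hence ac: "a \<in> carrier G" and Ta: "T F a = F" unfolding Stab_def by auto
  have "T F (inv a) = T (T F a) (inv a)" using Ta by simp
  also have "\<dots> = T F \<one>" using T_comp[OF F ac] ac by simp
  also have "\<dots> = F" using T_one[OF F] .
  finally show "inv a \<in> Stab F" unfolding Stab_def using ac by simp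
next
  fix a b assume a: "a \<in> Stab F" and b: "b \<in> Stab F"
  hence ac: "a \<in> carrier G" and Ta: "T F a = F" and bc: "b \<in> carrier G" and Tb: "T F b = F"
    unfolding Stab_def by auto
  have "T F (a \<otimes> b) = T (T F a) b" using T_comp[OF F ac bc] by simp
  also have "\<dots> = F" using Ta Tb by simp
  finally show "a \<otimes> b \<in> Stab F" unfolding Stab_def using ac bc by simp
qed

lemma none_edge:
  assumes F: "F \<in> FF" and e: "e \<in> F" and n: "None \<in> e"
  shows "\<exists>b\<in>carrier G. e = {None, Some b}"
proof -
  have "e \<in> complete_edges (gbar G)" using F_sub[OF F] e by (rule subsetD)
  hence eg: "e \<subseteq> gbar G" and c2: "card e = 2" unfolding complete_edges_def by simp_all
  obtain x y where xy: "e = {x, y}" "x \<noteq> y" using c2 card_2_iff by metis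
  obtain w where e2: "e = {None, w}" and w: "w \<noteq> None"
  proof (cases "x = None")
    case True
    hence "e = {None, y}" "y \<noteq> None" using xy by auto
    thus ?thesis using that by blast
  next
    case False
    hence "y = None" using n xy by auto
    thus ?thesis using that xy False by (simp add: insert_commute)
  qed
  have "w \<in> gbar G" using e2 eg by simp
  hence "w \<in> Some ` carrier G" using w unfolding gbar_def by simp
  then obtain b where b: "b \<in> carrier G" "w = Some b" by (rule imageE)
  show ?thesis using b e2 by (intro bexI[of _ b]) auto
qed

lemma card_AA:
  assumes F: "F \<in> FF"
  shows "card (AA F) = k"
proof -
  have "{e \<in> F. None \<in> e} = (\<lambda>b. {None, Some b}) ` AA F"
  proof
    show "{e \<in> F. None \<in> e} \<subseteq> (\<lambda>b. {None, Some b}) ` AA F"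
    proof
      fix e assume "e \<in> {e \<in> F. None \<in> e}"
      hence e: "e \<in> F" "None \<in> e" by auto
      obtain b where "b \<in> carrier G" "e = {None, Some b}" using none_edge[OF F e] by blast
      thus "e \<in> (\<lambda>b. {None, Some b}) ` AA F" unfolding AA_def using e by blast
    qed
    show "(\<lambda>b. {None, Some b}) ` AA F \<subseteq> {e \<in> F. None \<in> e}" unfolding AA_def by blast
  qed
  moreover have "inj_on (\<lambda>b. {None, Some b :: 'a option}) (AA F)"
    by (auto simp: inj_on_def doubleton_eq_iff)
  ultimately have "card (AA F) = degree_in F None"
    unfolding degree_in_def by (simp add: card_image)
  thus ?thesis using F_deg[OF F] by simp
qed

lemma AA_coset:
  assumes F: "F \<in> FF" and a: "a \<in> AA F"
  shows "AA F = (\<lambda>s. a \<otimes> s) ` Stab F"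
proof
  have ac: "a \<in> carrier G" and ea: "{None, Some a} \<in> F" using a unfolding AA_def by auto
  show "(\<lambda>s. a \<otimes> s) ` Stab F \<subseteq> AA F"
  proof
    fix b assume "b \<in> (\<lambda>s. a \<otimes> s) ` Stab F"
    then obtain s where s: "s \<in> Stab F" "b = a \<otimes> s" by blast
    have sc: "s \<in> carrier G" and Ts: "T F s = F" using s unfolding Stab_def by auto
    have "rmult G s ` {None, Some a} \<in> T F s" using edge_trans[OF ea] .
    hence "{None, Some b} \<in> F" using Ts s by simp
    thus "b \<in> AA F" unfolding AA_def using s ac sc by simp
  qed
  show "AA F \<subseteq> (\<lambda>s. a \<otimes> s) ` Stab F"
  proof
    fix b assume b: "b \<in> AA F"
    hence bc: "b \<in> carrier G" and eb: "{None, Some b} \<in> F" unfolding AA_def by auto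
    define s where "s = inv a \<otimes> b"
    have sc: "s \<in> carrier G" unfolding s_def using ac bc by simp
    have "rmult G s ` {None, Some a} = {None, Some b}" unfolding s_def using ac bc by simp
    hence "s \<in> Stab F" using stab_edge[OF F sc ea] eb by simp
    moreover have "b = a \<otimes> s" unfolding s_def using ac bc by simp
    ultimately show "b \<in> (\<lambda>s. a \<otimes> s) ` Stab F" by blast
  qed
qed

lemma card_Stab:
  assumes F: "F \<in> FF" and a: "a \<in> AA F"
  shows "card (Stab F) = k"
proof -
  have ac: "a \<in> carrier G" using a unfolding AA_def by auto
  have "inj_on (\<lambda>s. a \<otimes> s) (Stab F)" using ac unfolding Stab_def inj_on_def by auto
  hence "card (AA F) = card (Stab F)" using AA_coset[OF F a] by (simp add: card_image)
  thus ?thesis using card_AA[OF F] by simp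
qed

lemma main_struct:
  "\<exists>S. subgroup S G \<and> card S = k \<and>
     (\<forall>t. t \<in> carrier G \<and> t \<noteq> \<one> \<and> t \<otimes> t = \<one> \<longrightarrow> (\<exists>g\<in>carrier G. inv g \<otimes> t \<otimes> g \<in> S))"
proof -
  have "{None, Some \<one>} \<in> complete_edges (gbar G)"
    unfolding complete_edges_def gbar_def by auto
  then obtain F0 where F0: "F0 \<in> FF" and e0: "{None, Some \<one>} \<in> F0" using F_cover by blast
  have a0: "\<one> \<in> AA F0" unfolding AA_def using e0 by simp
  define S where "S = Stab F0"
  have conj: "\<exists>g\<in>carrier G. inv g \<otimes> t \<otimes> g \<in> S" if t: "t \<in> carrier G" "t \<noteq> \<one>" "t \<otimes> t = \<one>" for t
  proof -
    have "{Some \<one>, Some t} \<in> complete_edges (gbar G)"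
      unfolding complete_edges_def gbar_def using t by auto
    then obtain F' where F': "F' \<in> FF" and e': "{Some \<one>, Some t} \<in> F'" using F_cover by blast
    have "rmult G t ` {Some \<one>, Some t} = {Some \<one>, Some t}" using t by auto
    hence tS: "t \<in> Stab F'" using stab_edge[OF F' t(1) e'] e' by simp
    hence Tt: "T F' t = F'" unfolding Stab_def by simp
    have "AA F' \<noteq> {}" using card_AA[OF F'] kpos by auto
    then obtain b where b: "b \<in> AA F'" by blast
    have bc: "b \<in> carrier G" and eb: "{None, Some b} \<in> F'" using b unfolding AA_def by auto
    have "rmult G b ` {None, Some \<one>} \<in> T F0 b" using edge_trans[OF e0] .
    hence "{None, Some b} \<in> T F0 b" using bc by simp
    hence TF0: "T F0 b = F'" using F_disj[OF F_trans[OF F0 bc] F'] eb by blast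
    have c: "b \<otimes> t \<otimes> inv b \<in> carrier G" using bc t by simp
    have "T F0 (b \<otimes> t \<otimes> inv b) = T (T F0 (b \<otimes> t)) (inv b)"
      using T_comp[OF F0 _ _, of "b \<otimes> t" "inv b"] bc t by simp
    also have "T F0 (b \<otimes> t) = T (T F0 b) t" using T_comp[OF F0 bc t(1)] by simp
    also have "\<dots> = F'" using TF0 Tt by simp
    also have "T F' (inv b) = T (T F0 b) (inv b)" using TF0 by simp
    also have "\<dots> = T F0 \<one>" using T_comp[OF F0 bc, of "inv b"] bc by simp
    also have "\<dots> = F0" using T_one[OF F0] .
    finally have "b \<otimes> t \<otimes> inv b \<in> S" unfolding S_def Stab_def using c by simp
    moreover have "inv (inv b) \<otimes> t \<otimes> inv b = b \<otimes> t \<otimes> inv b" using bc by simp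
    ultimately show ?thesis using bc by (metis inv_closed)
  qed
  show ?thesis using stab_subgroup[OF F0] card_Stab[OF F0 a0] conj unfolding S_def by blast
qed

end



lemma (in group) conj_classI: "g \<in> carrier G \<Longrightarrow> inv g \<otimes> x \<otimes> g \<in> conj_class G x"
  unfolding conj_class_def by (rule CollectI, rule exI[of _ g]) simp

lemma (in group) conj_classE:
  "y \<in> conj_class G x \<Longrightarrow> (\<And>g. g \<in> carrier G \<Longrightarrow> y = inv g \<otimes> x \<otimes> g \<Longrightarrow> P) \<Longrightarrow> P"
  unfolding conj_class_def by blast

lemma (in group) main_thm:
  fixes n m :: nat
  assumes "True" and "finite (carrier G)"
    and "n \<ge> 1" and "odd m"
    and "is_R G (2 ^ n * m)"
    and "num_invol_classes G = m * (2 ^ n - 1)"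
  shows "\<forall>z x. central G z \<and> involution G z \<and> involution G x \<and> x \<noteq> z \<longrightarrow>
           involution G (x \<otimes>\<^bsub>G\<^esub> z) \<and> \<not> conjugate G x (x \<otimes>\<^bsub>G\<^esub> z)"
proof (intro allI impI)
  fix z x assume H: "central G z \<and> involution G z \<and> involution G x \<and> x \<noteq> z"
  have fin: "finite (carrier G)" by fact
  obtain FF where rotF: "one_rotational G (2^n * m) FF" using assms(5) unfolding is_R_def by blast
  have mpos: "0 < m" using assms(4) by (cases m) auto
  hence kpos: "0 < 2^n * m" by simp
  interpret R: rot G "2^n * m" FF by unfold_locales (use rotF kpos in auto)
  obtain S where S: "subgroup S G" and cS: "card S = 2^n * m"
    and conjS: "\<And>t. t \<in> carrier G \<Longrightarrow> t \<noteq> \<one> \<Longrightarrow> t \<otimes> t = \<one> \<Longrightarrow> \<exists>g\<in>carrier G. inv g \<otimes> t \<otimes> g \<in> S"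
    using R.main_struct by blast
  have Sc: "S \<subseteq> carrier G" using subgroup.subset[OF S] .
  have finS: "finite S" using fin Sc finite_subset by blast
  define InvS where "InvS = {y \<in> S. y \<noteq> \<one> \<and> y \<otimes> y = \<one>}"
  have Sgrp: "group (G\<lparr>carrier := S\<rparr>)" using subgroup.subgroup_is_group[OF S is_group] .
  have "card {y \<in> carrier (G\<lparr>carrier := S\<rparr>). y \<noteq> \<one>\<^bsub>G\<lparr>carrier := S\<rparr>\<^esub> \<and> y \<otimes>\<^bsub>G\<lparr>carrier := S\<rparr>\<^esub> y = \<one>\<^bsub>G\<lparr>carrier := S\<rparr>\<^esub>} \<le> m * (2^n - 1)"
    using group.invol_count[OF Sgrp, of n m] finS cS assms(4) by (simp add: order_def)
  hence cInvS: "card InvS \<le> m * (2^n - 1)" unfolding InvS_def by simp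
  have finInvS: "finite InvS" using finS unfolding InvS_def by simp
  define Cl where "Cl = {conj_class G y |y. involution G y}"
  have cCl: "card Cl = m * (2^n - 1)" using assms(6) unfolding num_invol_classes_def Cl_def .
  have ex: "\<exists>s. s \<in> C \<inter> InvS" if C: "C \<in> Cl" for C
  proof -
    obtain y where y: "involution G y" and Cy: "C = conj_class G y" using C unfolding Cl_def by blast
    have yy: "y \<in> carrier G" "y \<noteq> \<one>" "y \<otimes> y = \<one>" using y invol_iff by auto
    obtain g where g: "g \<in> carrier G" and gS: "inv g \<otimes> y \<otimes> g \<in> S" using conjS[OF yy] by blast
    have "inv g \<otimes> y \<otimes> g \<in> InvS" unfolding InvS_def using gS conj_invol[OF yy g] by simp
    moreover have "inv g \<otimes> y \<otimes> g \<in> C" using Cy conj_classI[OF g] by simp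
    ultimately show ?thesis by blast
  qed
  define f where "f C = (SOME s. s \<in> C \<inter> InvS)" for C
  have fC: "f C \<in> C \<inter> InvS" if "C \<in> Cl" for C
    unfolding f_def using someI_ex[OF ex[OF that]] .
  have fcl: "conj_class G (f C) = C" if C: "C \<in> Cl" for C
  proof -
    obtain y where y: "involution G y" and Cy: "C = conj_class G y" using C unfolding Cl_def by blast
    have yc: "y \<in> carrier G" using y invol_iff by auto
    show ?thesis using conj_class_eq[OF yc] fC[OF C] Cy by simp
  qed
  have inj: "inj_on f Cl"
  proof (rule inj_onI)
    fix C1 C2 assume "C1 \<in> Cl" "C2 \<in> Cl" "f C1 = f C2"
    thus "C1 = C2" using fcl by metis
  qed
  have sub: "f ` Cl \<subseteq> InvS" using fC by blast
  have "card (f ` Cl) = m * (2^n - 1)" using card_image[OF inj] cCl by simp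
  hence img: "f ` Cl = InvS" using card_seteq[OF finInvS sub] cInvS by simp
  have uniq: "s1 = s2" if s1: "s1 \<in> InvS" and s2: "s2 \<in> InvS" and c: "s2 \<in> conj_class G s1" for s1 s2
  proof -
    obtain C1 where C1: "C1 \<in> Cl" "s1 = f C1" using s1 img by blast
    obtain C2 where C2: "C2 \<in> Cl" "s2 = f C2" using s2 img by blast
    have s1c: "s1 \<in> carrier G" using s1 Sc unfolding InvS_def by blast
    have "conj_class G s2 = conj_class G s1" using conj_class_eq[OF s1c c] .
    hence "C1 = C2" using fcl[OF C1(1)] fcl[OF C2(1)] C1 C2 by simp
    thus ?thesis using C1 C2 by simp
  qed
  have zc: "z \<in> carrier G" and z1: "z \<noteq> \<one>" and zz: "z \<otimes> z = \<one>"
    and xc: "x \<in> carrier G" and x1: "x \<noteq> \<one>" and xx: "x \<otimes> x = \<one>"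
    using H invol_iff by auto
  have zcomm: "\<And>g. g \<in> carrier G \<Longrightarrow> z \<otimes> g = g \<otimes> z" using H unfolding central_def by blast
  have xzc: "x \<otimes> z \<in> carrier G" using xc zc by simp
  have "(x \<otimes> z) \<otimes> (x \<otimes> z) = x \<otimes> (z \<otimes> x) \<otimes> z" using xc zc by (simp add: m_assoc)
  also have "\<dots> = (x \<otimes> x) \<otimes> (z \<otimes> z)" using zcomm[OF xc] xc zc by (simp add: m_assoc)
  also have "\<dots> = \<one>" using xx zz by simp
  finally have xzxz: "(x \<otimes> z) \<otimes> (x \<otimes> z) = \<one>" .
  have xz1: "x \<otimes> z \<noteq> \<one>"
  proof
    assume "x \<otimes> z = \<one>"
    hence "x = inv z" using xc zc by (metis inv_equality)
    moreover have "inv z = z" using zz zc by (metis inv_equality)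
    ultimately show False using H by simp
  qed
  have invxz: "involution G (x \<otimes> z)" using invol_iff xzc xz1 xzxz by simp
  have notconj: "\<not> conjugate G x (x \<otimes> z)"
  proof
    assume "conjugate G x (x \<otimes> z)"
    then obtain h where h: "h \<in> carrier G" and xzh: "x \<otimes> z = inv h \<otimes> x \<otimes> h"
      unfolding conjugate_def by (elim bexE) simp
    have xzcl: "x \<otimes> z \<in> conj_class G x" using conj_classI[OF h, of x] xzh by simp
    obtain g where g: "g \<in> carrier G" and gS: "inv g \<otimes> x \<otimes> g \<in> S" using conjS[OF xc x1 xx] by blast
    obtain g' where g': "g' \<in> carrier G" and g'S: "inv g' \<otimes> z \<otimes> g' \<in> S" using conjS[OF zc z1 zz] by blast
    have "inv g' \<otimes> z \<otimes> g' = inv g' \<otimes> (z \<otimes> g')" using g' zc by (simp add: m_assoc)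
    also have "\<dots> = z" using zcomm[OF g'] g' zc by simp
    finally have zS: "z \<in> S" using g'S by simp
    define s where "s = inv g \<otimes> x \<otimes> g"
    have sInv: "s \<in> InvS" unfolding InvS_def s_def using gS conj_invol[OF xc x1 xx g] by simp
    have "s \<otimes> z = inv g \<otimes> x \<otimes> (g \<otimes> z)" unfolding s_def using g xc zc by (simp add: m_assoc)
    also have "\<dots> = inv g \<otimes> (x \<otimes> z) \<otimes> g" using zcomm[OF g] g xc zc by (simp add: m_assoc)
    finally have szd: "s \<otimes> z = inv g \<otimes> (x \<otimes> z) \<otimes> g" .
    have szS: "s \<otimes> z \<in> S" using subgroup.m_closed[OF S gS zS] unfolding s_def .
    have szInv: "s \<otimes> z \<in> InvS" unfolding InvS_def using szS szd conj_invol[OF xzc xz1 xzxz g] by simp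
    have scl: "conj_class G s = conj_class G x" unfolding s_def using conj_class_eq[OF xc conj_classI[OF g]] .
    have "s \<otimes> z \<in> conj_class G (x \<otimes> z)" using szd conj_classI[OF g] by simp
    also have "conj_class G (x \<otimes> z) = conj_class G x" using conj_class_eq[OF xc xzcl] .
    finally have "s \<otimes> z \<in> conj_class G s" using scl by simp
    hence "s = s \<otimes> z" using uniq[OF sInv szInv] by simp
    moreover have sc: "s \<in> carrier G" unfolding s_def using g xc by simp
    ultimately have "s \<otimes> z = s \<otimes> \<one>" by simp
    hence "z = \<one>" using sc zc l_cancel[of s z \<one>] by simp
    thus False using z1 by simp
  qed
  show "involution G (x \<otimes>\<^bsub>G\<^esub> z) \<and> \<not> conjugate G x (x \<otimes>\<^bsub>G\<^esub> z)" using invxz notconj by simp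
qed

theorem theorem2p6:
  fixes G :: "('a, 'b) monoid_scheme" and n m :: nat
  assumes "group G" and "finite (carrier G)"
    and "n \<ge> 1" and "odd m"
    and "is_R G (2 ^ n * m)"
    and "num_invol_classes G = m * (2 ^ n - 1)"
  shows "\<forall>z x. central G z \<and> involution G z \<and> involution G x \<and> x \<noteq> z \<longrightarrow>
           involution G (x \<otimes>\<^bsub>G\<^esub> z) \<and> \<not> conjugate G x (x \<otimes>\<^bsub>G\<^esub> z)"
  using group.main_thm[OF assms(1) TrueI assms(2-6)] .

end
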